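(* Let the setting of the context hold, fix $x\in\mathcal{X}$, and assume $|\mathcal{L}_f(z,t)|\le M$ for all $z$ and $t\in\{0,1\}$. Then $$\epsilon_{CF}(x)\le\sum_{t\in\{0,1\}}p(1-t\mid x)\,\epsilon_{F,t}(x)+M\,\mathbb{D}(x),$$ where $\epsilon_{CF}(x):=\sum_t p(1-t\mid x)\,\epsilon_{CF,t}(x)$ and $\mathbb{D}(x):=\sum_t\sqrt{D_{\mathrm{KL}}(q_t(\cdot\mid x)\,\Vert\,q_{1-t}(\cdot\mid x))/2}$.
   Context: Binary treatment $T\in\{0,1\}$, covariates $X\in\mathcal{X}$, real-valued potential outcomes $Y(t)$, observed $Y=Y(T)$, observational distribution $p(x,y,t)$. $\mathbb{P}_t$ ($t=0,1$) are functions of $X$ and $p_{Y(t)\mid\mathbb{P}_t}(y\mid P)$ denotes the conditional density of $Y(t)$ given $\mathbb{P}_t(X)=P$. Let $f_t,g_t$ be functions of $z$ and $q_\phi(z\mid x,y,t)$ a conditional density; $q_t(z\mid x):=\mathbb{E}_{p(y\mid x,t)}q_\phi(z\mid x,y,t)$. Define $\mathcal{L}_f(z,t):=g_t(z)^{-2}\int(y-f_t(z))^2p_{Y(t)\mid\mathbb{P}_t}(y\mid z)\,dy$, $\epsilon_{F,t}(x):=\mathbb{E}_{q_t(z\mid x)}\mathcal{L}_f(z,t)$, and $\epsilon_{CF,t}(x):=\mathbb{E}_{q_{1-t}(z\mid x)}\mathcal{L}_f(z,t)$. *)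

theory Defs
  imports "HOL-Probability.Probability"
begin

text \<open>Treatment indices t are naturals restricted to {0,1}; 1 - t is the other arm.
  The latent z ranges over a measure space Z (base measure for the densities q),
  outcomes y are real with Lebesgue measure.\<close>

text \<open>q_t(z|x) := E_{p(y|x,t)} q_phi(z|x,y,t);  py x t y is the conditional density p(y|x,t),
  qphi x y t z is q_phi(z|x,y,t).\<close>
definition qmarg :: "('x \<Rightarrow> nat \<Rightarrow> real \<Rightarrow> real) \<Rightarrow> ('x \<Rightarrow> real \<Rightarrow> nat \<Rightarrow> 'z \<Rightarrow> real)
    \<Rightarrow> 'x \<Rightarrow> nat \<Rightarrow> 'z \<Rightarrow> real" where
  "qmarg py qphi x t z = (\<integral>y. py x t y * qphi x y t z \<partial>lborel)"

text \<open>L_f(z,t) := g_t(z)^(-2) * int (y - f_t(z))^2 p_{Y(t)|P_t}(y|z) dy;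
  pYP t P y is the conditional density of Y(t) given P_t(X) = P.\<close>
definition Lf :: "(nat \<Rightarrow> 'z \<Rightarrow> real) \<Rightarrow> (nat \<Rightarrow> 'z \<Rightarrow> real) \<Rightarrow> (nat \<Rightarrow> 'z \<Rightarrow> real \<Rightarrow> real)
    \<Rightarrow> 'z \<Rightarrow> nat \<Rightarrow> real" where
  "Lf f g pYP z t = (g t z) powi (-2) * (\<integral>y. (y - f t z)^2 * pYP t z y \<partial>lborel)"

definition epsF :: "'z measure \<Rightarrow> ('x \<Rightarrow> nat \<Rightarrow> 'z \<Rightarrow> real) \<Rightarrow> ('z \<Rightarrow> nat \<Rightarrow> real)
    \<Rightarrow> nat \<Rightarrow> 'x \<Rightarrow> real" where
  "epsF Z q L t x = (\<integral>z. q x t z * L z t \<partial>Z)"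

definition epsCFt :: "'z measure \<Rightarrow> ('x \<Rightarrow> nat \<Rightarrow> 'z \<Rightarrow> real) \<Rightarrow> ('z \<Rightarrow> nat \<Rightarrow> real)
    \<Rightarrow> nat \<Rightarrow> 'x \<Rightarrow> real" where
  "epsCFt Z q L t x = (\<integral>z. q x (1 - t) z * L z t \<partial>Z)"

text \<open>eps_CF(x) := sum_t p(1-t|x) eps_CF,t(x); pT x t is p(t|x).\<close>
definition epsCF :: "'z measure \<Rightarrow> ('x \<Rightarrow> nat \<Rightarrow> real) \<Rightarrow> ('x \<Rightarrow> nat \<Rightarrow> 'z \<Rightarrow> real)
    \<Rightarrow> ('z \<Rightarrow> nat \<Rightarrow> real) \<Rightarrow> 'x \<Rightarrow> real" where
  "epsCF Z pT q L x = (\<Sum>t\<in>{0,1::nat}. pT x (1 - t) * epsCFt Z q L t x)"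

text \<open>Library convention:
  KL_divergence b M N = int log_b (dN/dM) dN = D_KL(N || M).\<close>
definition KLdiv :: "'z measure \<Rightarrow> ('z \<Rightarrow> real) \<Rightarrow> ('z \<Rightarrow> real) \<Rightarrow> ereal" where
  "KLdiv Z p q =
    (let P = density Z (\<lambda>z. ennreal (p z)); Q = density Z (\<lambda>z. ennreal (q z)) in
     if absolutely_continuous Q P \<and> integrable P (entropy_density (exp 1) Q P)
     then ereal (KL_divergence (exp 1) Q P) else \<infinity>)"

definition ereal_sqrt :: "ereal \<Rightarrow> ereal" where
  "ereal_sqrt a = (case a of ereal r \<Rightarrow> ereal (sqrt r) | PInfty \<Rightarrow> \<infinity> | MInfty \<Rightarrow> 0)"

definition Dx :: "'z measure \<Rightarrow> ('x \<Rightarrow> nat \<Rightarrow> 'z \<Rightarrow> real) \<Rightarrow> 'x \<Rightarrow> ereal" where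
  "Dx Z q x = (\<Sum>t\<in>{0,1::nat}. ereal_sqrt (KLdiv Z (q x t) (q x (1 - t)) / 2))"

end

theory Submission
  imports Defs
begin
lemma hderiv: assumes "u > (0::real)"
  shows "((\<lambda>u. ln u - (u-1)*(5*u+1)/(2*u*(u+2))) has_real_derivative (u-1)^3/(u^2*(u+2)^2)) (at u)"
proof -
  have "((\<lambda>u. ln u - (u-1)*(5*u+1)/(2*u*(u+2))) has_real_derivative
     (1/u - ((1*(5*u+1) + (u-1)*5) * (2*u*(u+2)) - (u-1)*(5*u+1)*(2*(u+2)+2*u*1)) / (2*u*(u+2))^2)) (at u)"
    using assms by (auto intro!: derivative_eq_intros simp: power2_eq_square)
  moreover have "1/u - ((1*(5*u+1) + (u-1)*5) * (2*u*(u+2)) - (u-1)*(5*u+1)*(2*(u+2)+2*u*1)) / (2*u*(u+2))^2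
     = (u-1)^3/(u^2*(u+2)^2)"
  proof -
    have n: "u \<noteq> 0" "u + 2 \<noteq> 0" using assms by auto
    show ?thesis using n by (simp add: divide_simps power2_eq_square power3_eq_cube) (simp add: algebra_simps)
  qed
  ultimately show ?thesis by simp
qed

lemma hpos: assumes "u > (0::real)" shows "0 \<le> ln u - (u-1)*(5*u+1)/(2*u*(u+2))"
proof (cases "u \<ge> 1")
  case True
  have "ln 1 - (1-1)*(5*1+1)/(2*1*(1+2)) \<le> ln u - (u-1)*(5*u+1)/(2*u*(u+2::real))"
    apply (rule DERIV_nonneg_imp_nondecreasing[OF True])
    subgoal for x using hderiv[of x] True by (intro exI[of _ "(x-1)^3/(x^2*(x+2)^2)"]) auto
    done
  then show ?thesis by simp
next
  case False
  have "ln u - (u-1)*(5*u+1)/(2*u*(u+2::real)) \<ge> ln 1 - (1-1)*(5*1+1)/(2*1*(1+2))"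
    apply (rule DERIV_nonpos_imp_nonincreasing[of u 1])
    using False apply simp
    subgoal for x proof -
      assume x: "u \<le> x" "x \<le> 1"
      have "0 \<le> (1-x)^3" using x by simp
      then have "(x-1)^3 \<le> 0" by (simp add: power3_eq_cube algebra_simps)
      then have "(x-1)^3/(x^2*(x+2)^2) \<le> 0" by (simp add: divide_nonpos_nonneg)
      then show ?thesis using hderiv[of x] x assms by (intro exI[of _ "(x-1)^3/(x^2*(x+2)^2)"]) auto
    qed
    done
  then show ?thesis by simp
qed

lemma scalarA: assumes "u \<ge> (0::real)" shows "3*(u-1)^2 \<le> (2*u+4)*(u*ln u - u + 1)"
proof (cases "u = 0")
  case True then show ?thesis by simp
next
  case False
  then have u: "u > 0" using assms by simp
  have "(u-1)*(5*u+1)/(2*u*(u+2)) \<le> ln u" using hpos[OF u] by simp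
  moreover have "2*u*(u+2) > 0" using u by simp
  ultimately have L: "(u-1)*(5*u+1) \<le> ln u * (2*u*(u+2))" by (simp add: pos_divide_le_eq)
  have e1: "(2*u+4)*(u*ln u - u + 1) = ln u * (2*u*(u+2)) - (2*u+4)*(u-1)" by (simp add: algebra_simps)
  have e2: "3*(u-1)^2 + (2*u+4)*(u-1) = (u-1)*(5*u+1)" by (simp add: algebra_simps power2_eq_square)
  show ?thesis using L e1 e2 by linarith
qed

lemma scalarB: assumes "p \<ge> (0::real)" "q > 0" "c > 0"
  shows "\<bar>p - q\<bar> \<le> c*(2*p+4*q)/6 + (p * ln (p/q) - p + q)/(2*c)"
proof -
  obtain u where u: "u \<ge> 0" "p = q*u" using assms by (intro that[of "p/q"]) auto
  have pq: "p/q = u" using u assms by simp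
  have A: "3*(u-1)^2 \<le> (2*u+4)*(u*ln u - u + 1)" using scalarA u by simp
  have "3*(p-q)^2 = q^2*(3*(u-1)^2)" unfolding u(2) by (simp add: algebra_simps power2_eq_square)
  also have "\<dots> \<le> q^2*((2*u+4)*(u*ln u - u + 1))" using A by (simp add: mult_left_mono)
  also have "\<dots> = (2*p+4*q)*(p * ln (p/q) - p + q)" unfolding pq using u(2) by (simp add: algebra_simps power2_eq_square)
  finally have B: "3*(p-q)^2 \<le> (2*p+4*q)*(p * ln (p/q) - p + q)" .
  define a where "a = c*(2*p+4*q)/6"
  define phi where "phi = p * ln (p/q) - p + q"
  define b where "b = phi/(2*c)"
  have B': "3*(p-q)^2 \<le> (2*p+4*q)*phi" using B unfolding phi_def .
  have ab: "4*a*b = (2*p+4*q)*phi/3" using assms by (simp add: a_def b_def)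
  have a0: "a \<ge> 0" using assms by (simp add: a_def)
  have "0 \<le> 3*(p-q)^2" by simp
  then have "0 \<le> (2*p+4*q)*phi" using B' by linarith
  moreover have "2*p+4*q > 0" using assms by simp
  ultimately have "phi \<ge> 0" by (simp add: zero_le_mult_iff)
  then have b0: "b \<ge> 0" using assms by (simp add: b_def)
  have "(p-q)^2 \<le> 4*a*b" using B' ab by linarith
  also have "\<dots> \<le> (a+b)^2"
  proof -
    have "0 \<le> (a-b)^2" by simp
    then show ?thesis by (simp add: power2_eq_square algebra_simps)
  qed
  finally have "\<bar>p-q\<bar>^2 \<le> (a+b)^2" by simp
  then have "\<bar>p-q\<bar> \<le> a+b" by (rule power2_le_imp_le) (use a0 b0 in linarith)
  then show ?thesis unfolding a_def b_def phi_def .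
qed

lemma pinsker_aux:
  fixes Z :: "'z measure" and p q :: "'z \<Rightarrow> real" and k :: real
  assumes Z: "sigma_finite_measure Z"
    and pm[measurable]: "p \<in> borel_measurable Z" and qm[measurable]: "q \<in> borel_measurable Z"
    and p0: "\<And>z. z \<in> space Z \<Longrightarrow> 0 \<le> p z" and q0: "\<And>z. z \<in> space Z \<Longrightarrow> 0 \<le> q z"
    and pi: "integrable Z p" and qi: "integrable Z q"
    and p1: "(\<integral>z. p z \<partial>Z) = 1" and q1: "(\<integral>z. q z \<partial>Z) = 1"
    and K: "KLdiv Z p q = ereal k"
  shows "0 \<le> k \<and> (\<integral>z. \<bar>p z - q z\<bar> \<partial>Z) \<le> 2 * sqrt (k/2)"
proof -
  interpret Z: sigma_finite_measure Z by fact
  define P where "P = density Z (\<lambda>z. ennreal (p z))"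
  define Q where "Q = density Z (\<lambda>z. ennreal (q z))"
  have cond: "absolutely_continuous Q P \<and> integrable P (entropy_density (exp 1) Q P)"
    and kdef: "k = KL_divergence (exp 1) Q P"
    using K unfolding KLdiv_def Let_def P_def[symmetric] Q_def[symmetric]
    by (auto split: if_splits)
  have ac: "AE z in Z. q z = 0 \<longrightarrow> p z = 0"
  proof -
    define S where "S = {z \<in> space Z. q z = 0}"
    have S: "S \<in> sets Z" unfolding S_def by measurable
    have "S \<in> null_sets Q" unfolding Q_def using S
      by (subst null_sets_density_iff) (auto simp: S_def)
    then have "S \<in> null_sets P" using cond unfolding absolutely_continuous_def by auto
    then have "AE z in Z. z \<in> S \<longrightarrow> ennreal (p z) = 0" unfolding P_def
      by (subst (asm) null_sets_density_iff) auto
    then show ?thesis using AE_space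
      by eventually_elim (auto simp: S_def dest: p0)
  qed
  have p0': "AE z in Z. 0 \<le> p z" and q0': "AE z in Z. 0 \<le> q z" using p0 q0 by auto
  have kint: "k = (\<integral>z. p z * ln (p z / q z) \<partial>Z)"
    unfolding kdef P_def Q_def
    by (subst Z.KL_density_density[OF _ qm q0' pm p0' ac]) (auto simp: log_def)
  have PQ: "density Q (\<lambda>z. ennreal (p z / q z)) = P"
    unfolding P_def Q_def using density_density_divide[OF qm q0' pm p0' ac] .
  have Qsf: "sigma_finite_measure Q" unfolding Q_def
    by (subst Z.sigma_finite_iff_density_finite) auto
  have "AE z in Q. ennreal (p z / q z) = RN_deriv Q P z"
    using sigma_finite_measure.RN_deriv_unique[OF Qsf _ PQ] by (simp add: Q_def)
  then have RN: "AE z in Z. 0 < q z \<longrightarrow> ennreal (p z / q z) = RN_deriv Q P z"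
    unfolding Q_def by (subst (asm) AE_density) auto
  have I1: "integrable Z (\<lambda>z. p z * entropy_density (exp 1) Q P z)"
    using cond unfolding P_def
    by (subst (asm) integrable_real_density) (auto simp: entropy_density_def Q_def p0')
  have I2: "AE z in Z. p z * entropy_density (exp 1) Q P z = p z * ln (p z / q z)"
    using RN ac p0' q0'
  proof eventually_elim
    case (elim z)
    show ?case
    proof (cases "q z = 0")
      case True then show ?thesis using elim by simp
    next
      case False
      then have "0 < q z" using elim by simp
      then have "RN_deriv Q P z = ennreal (p z / q z)" using elim by simp
      moreover have "0 \<le> p z / q z" using elim by simp
      ultimately show ?thesis by (simp add: entropy_density_def log_def)
    qed
  qed
  have lint: "integrable Z (\<lambda>z. p z * ln (p z / q z))"
    by (rule integrable_cong_AE_imp[OF I1 _ I2]) measurable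
  have bnd: "(\<integral>z. \<bar>p z - q z\<bar> \<partial>Z) \<le> c + k/(2*c)" if c: "c > 0" for c
  proof -
    have "(\<integral>z. \<bar>p z - q z\<bar> \<partial>Z) \<le>
          (\<integral>z. c*(2*p z+4*q z)/6 + (p z * ln (p z/q z) - p z + q z)/(2*c) \<partial>Z)"
    proof (rule integral_mono_AE)
      show "integrable Z (\<lambda>z. \<bar>p z - q z\<bar>)" using pi qi by auto
      show "integrable Z (\<lambda>z. c*(2*p z+4*q z)/6 + (p z * ln (p z/q z) - p z + q z)/(2*c))"
        using pi qi lint by auto
      show "AE z in Z. \<bar>p z - q z\<bar> \<le> c*(2*p z+4*q z)/6 + (p z * ln (p z/q z) - p z + q z)/(2*c)"
        using ac p0' q0'
      proof eventually_elim
        case (elim z)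
        show ?case
        proof (cases "q z = 0")
          case True then show ?thesis using elim by simp
        next
          case False then show ?thesis using elim scalarB[of "p z" "q z" c] c by simp
        qed
      qed
    qed
    also have "\<dots> = c*(2*(\<integral>z. p z \<partial>Z)+4*(\<integral>z. q z \<partial>Z))/6
        + ((\<integral>z. p z * ln (p z/q z) \<partial>Z) - (\<integral>z. p z \<partial>Z) + (\<integral>z. q z \<partial>Z))/(2*c)"
      using pi qi lint by simp
    also have "\<dots> = c + k/(2*c)" using p1 q1 kint by simp
    finally show ?thesis .
  qed
  have N0: "0 \<le> (\<integral>z. \<bar>p z - q z\<bar> \<partial>Z)" by simp
  have k0: "0 \<le> k"
  proof (rule ccontr)
    assume "\<not> 0 \<le> k"
    then have kn: "k < 0" by simp
    define c where "c = sqrt (-k/4)"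
    have c0: "c > 0" using kn by (simp add: c_def)
    have "c^2 = -k/4" using kn by (simp add: c_def)
    then have "c + k/(2*c) = (2*c^2 + k)/(2*c)" using c0 by (simp add: field_simps power2_eq_square)
    also have "\<dots> < 0" using kn c0 \<open>c^2 = -k/4\<close> by (intro divide_neg_pos) auto
    finally show False using bnd[OF c0] N0 by linarith
  qed
  show ?thesis
  proof (cases "k = 0")
    case True
    have "(\<integral>z. \<bar>p z - q z\<bar> \<partial>Z) \<le> 0"
    proof (rule field_le_epsilon)
      fix e :: real assume "0 < e" then show "(\<integral>z. \<bar>p z - q z\<bar> \<partial>Z) \<le> 0 + e"
        using bnd[of e] True by simp
    qed
    then show ?thesis using True by simp
  next
    case False
    then have kp: "k > 0" using k0 by simp
    define c where "c = sqrt (k/2)"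
    have c0: "c > 0" using kp by (simp add: c_def)
    have "c^2 = k/2" using kp by (simp add: c_def)
    then have "c + k/(2*c) = 2*c" using c0 by (simp add: field_simps power2_eq_square)
    then show ?thesis using bnd[OF c0] k0 by (simp add: c_def)
  qed
qed


lemma qmarg_props:
  fixes Z :: "'z measure" and x :: 'x
    and py :: "'x \<Rightarrow> nat \<Rightarrow> real \<Rightarrow> real"
    and qphi :: "'x \<Rightarrow> real \<Rightarrow> nat \<Rightarrow> 'z \<Rightarrow> real"
  assumes Z: "sigma_finite_measure Z"
    and py_meas: "py x t \<in> borel_measurable lborel"
    and py_nonneg: "\<And>y. 0 \<le> py x t y"
    and py_int: "integrable lborel (py x t)"
    and py_one: "(\<integral>y. py x t y \<partial>lborel) = 1"
    and qphi_meas: "(\<lambda>(y, z). qphi x y t z) \<in> borel_measurable (lborel \<Otimes>\<^sub>M Z)"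
    and qphi_nonneg: "\<And>y z. z \<in> space Z \<Longrightarrow> 0 \<le> qphi x y t z"
    and qphi_int: "\<And>y. integrable Z (qphi x y t)"
    and qphi_one: "\<And>y. (\<integral>z. qphi x y t z \<partial>Z) = 1"
  shows "qmarg py qphi x t \<in> borel_measurable Z"
    and "\<And>z. z \<in> space Z \<Longrightarrow> 0 \<le> qmarg py qphi x t z"
    and "integrable Z (qmarg py qphi x t)"
    and "(\<integral>z. qmarg py qphi x t z \<partial>Z) = 1"
proof -
  interpret Z: sigma_finite_measure Z by fact
  interpret PZ: pair_sigma_finite lborel Z
    unfolding pair_sigma_finite_def using Z sigma_finite_lborel by auto
  define F where "F = (\<lambda>y z. py x t y * qphi x y t z)"
  have Fm: "(\<lambda>(y, z). F y z) \<in> borel_measurable (lborel \<Otimes>\<^sub>M Z)"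
  proof -
    have "(\<lambda>w. py x t (fst w)) \<in> borel_measurable (lborel \<Otimes>\<^sub>M Z)"
      using py_meas by measurable
    moreover have "(\<lambda>w. (\<lambda>(y, z). qphi x y t z) w) \<in> borel_measurable (lborel \<Otimes>\<^sub>M Z)"
      using qphi_meas by simp
    ultimately have "(\<lambda>w. py x t (fst w) * (\<lambda>(y, z). qphi x y t z) w) \<in> borel_measurable (lborel \<Otimes>\<^sub>M Z)"
      by (rule borel_measurable_times)
    then show ?thesis unfolding F_def by (simp add: case_prod_beta)
  qed
  have inner: "(\<integral>\<^sup>+z. ennreal (F y z) \<partial>Z) = ennreal (py x t y)" for y
  proof -
    have "(\<integral>\<^sup>+z. ennreal (F y z) \<partial>Z) = (\<integral>\<^sup>+z. ennreal (py x t y) * ennreal (qphi x y t z) \<partial>Z)"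
      unfolding F_def by (intro nn_integral_cong) (simp add: ennreal_mult py_nonneg qphi_nonneg)
    also have "\<dots> = ennreal (py x t y) * (\<integral>\<^sup>+z. ennreal (qphi x y t z) \<partial>Z)"
      using qphi_int by (intro nn_integral_cmult) auto
    also have "(\<integral>\<^sup>+z. ennreal (qphi x y t z) \<partial>Z) = ennreal 1"
      using qphi_int qphi_one qphi_nonneg by (subst nn_integral_eq_integral) auto
    finally show ?thesis by simp
  qed
  have "(\<integral>\<^sup>+w. ennreal ((\<lambda>(y, z). F y z) w) \<partial>(lborel \<Otimes>\<^sub>M Z))
        = (\<integral>\<^sup>+y. \<integral>\<^sup>+z. ennreal (F y z) \<partial>Z \<partial>lborel)"
    using Fm by (subst Z.nn_integral_fst[symmetric]) auto
  also have "\<dots> = (\<integral>\<^sup>+y. ennreal (py x t y) \<partial>lborel)" by (simp add: inner)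
  also have "\<dots> = ennreal 1"
    using py_int py_one py_nonneg by (subst nn_integral_eq_integral) auto
  finally have nnF: "(\<integral>\<^sup>+w. ennreal ((\<lambda>(y, z). F y z) w) \<partial>(lborel \<Otimes>\<^sub>M Z)) = 1" by simp
  have Fint: "integrable (lborel \<Otimes>\<^sub>M Z) (\<lambda>(y, z). F y z)"
  proof (rule integrableI_nonneg[OF Fm])
    show "AE w in lborel \<Otimes>\<^sub>M Z. 0 \<le> (\<lambda>(y, z). F y z) w"
      using py_nonneg qphi_nonneg by (intro AE_I2) (auto simp: F_def space_pair_measure)
    show "(\<integral>\<^sup>+w. ennreal ((\<lambda>(y, z). F y z) w) \<partial>(lborel \<Otimes>\<^sub>M Z)) < \<infinity>" using nnF by simp
  qed
  have qeq: "qmarg py qphi x t = (\<lambda>z. \<integral>y. F y z \<partial>lborel)"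
    by (simp add: fun_eq_iff qmarg_def F_def)
  show qi: "integrable Z (qmarg py qphi x t)"
    unfolding qeq using PZ.integrable_snd[OF Fint] .
  then show "qmarg py qphi x t \<in> borel_measurable Z" by auto
  show "\<And>z. z \<in> space Z \<Longrightarrow> 0 \<le> qmarg py qphi x t z"
    unfolding qmarg_def using py_nonneg qphi_nonneg by (auto intro!: integral_nonneg_AE)
  have "(\<integral>z. qmarg py qphi x t z \<partial>Z) = integral\<^sup>L (lborel \<Otimes>\<^sub>M Z) (\<lambda>(y, z). F y z)"
    unfolding qeq using PZ.integral_snd[OF Fint] .
  also have "\<dots> = (\<integral>y. \<integral>z. F y z \<partial>Z \<partial>lborel)"
    using PZ.integral_fst[OF Fint] by simp
  also have "\<dots> = (\<integral>y. py x t y \<partial>lborel)"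
    unfolding F_def using qphi_one by simp
  finally show "(\<integral>z. qmarg py qphi x t z \<partial>Z) = 1" using py_one by simp
qed


lemma KLdiv_cases: "KLdiv Z p q = \<infinity> \<or> (\<exists>k. KLdiv Z p q = ereal k)"
  by (auto simp: KLdiv_def Let_def)

theorem lemma2:
  fixes Z :: "'z measure" and x :: 'x
    and pT :: "'x \<Rightarrow> nat \<Rightarrow> real"
    and py :: "'x \<Rightarrow> nat \<Rightarrow> real \<Rightarrow> real"
    and qphi :: "'x \<Rightarrow> real \<Rightarrow> nat \<Rightarrow> 'z \<Rightarrow> real"
    and f g :: "nat \<Rightarrow> 'z \<Rightarrow> real"
    and pYP :: "nat \<Rightarrow> 'z \<Rightarrow> real \<Rightarrow> real"
    and M :: real
  assumes Z: "sigma_finite_measure Z"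
    and pT_nonneg: "\<And>t. t \<in> {0,1} \<Longrightarrow> 0 \<le> pT x t"
    and pT_sum: "pT x 0 + pT x 1 = 1"
    and py_meas: "\<And>t. t \<in> {0,1} \<Longrightarrow> py x t \<in> borel_measurable lborel"
    and py_nonneg: "\<And>t y. t \<in> {0,1} \<Longrightarrow> 0 \<le> py x t y"
    and py_int: "\<And>t. t \<in> {0,1} \<Longrightarrow> integrable lborel (py x t)"
    and py_one: "\<And>t. t \<in> {0,1} \<Longrightarrow> (\<integral>y. py x t y \<partial>lborel) = 1"
    and qphi_meas: "\<And>t. t \<in> {0,1} \<Longrightarrow>
          (\<lambda>(y, z). qphi x y t z) \<in> borel_measurable (lborel \<Otimes>\<^sub>M Z)"
    and qphi_nonneg: "\<And>t y z. t \<in> {0,1} \<Longrightarrow> z \<in> space Z \<Longrightarrow> 0 \<le> qphi x y t z"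
    and qphi_int: "\<And>t y. t \<in> {0,1} \<Longrightarrow> integrable Z (qphi x y t)"
    and qphi_one: "\<And>t y. t \<in> {0,1} \<Longrightarrow> (\<integral>z. qphi x y t z \<partial>Z) = 1"
    and L_meas: "\<And>t. t \<in> {0,1} \<Longrightarrow> (\<lambda>z. Lf f g pYP z t) \<in> borel_measurable Z"
    and L_bound: "\<And>z t. t \<in> {0,1} \<Longrightarrow> \<bar>Lf f g pYP z t\<bar> \<le> M"
  shows "ereal (epsCF Z pT (qmarg py qphi) (Lf f g pYP) x)
         \<le> ereal (\<Sum>t\<in>{0,1::nat}. pT x (1 - t) * epsF Z (qmarg py qphi) (Lf f g pYP) t x)
           + ereal M * Dx Z (qmarg py qphi) x"
proof -
  define q where "q = qmarg py qphi x"
  define L where "L = Lf f g pYP"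
  have t01: "(0::nat) \<in> {0,1}" "(1::nat) \<in> {0,1}" by auto
  have qp: "q t \<in> borel_measurable Z \<and> (\<forall>z\<in>space Z. 0 \<le> q t z) \<and> integrable Z (q t)
      \<and> (\<integral>z. q t z \<partial>Z) = 1" if t: "t \<in> {0,1}" for t
    using qmarg_props[where py=py and qphi=qphi and x=x and t=t, OF Z py_meas[OF t] py_nonneg[OF t] py_int[OF t] py_one[OF t] qphi_meas[OF t]
      qphi_nonneg[OF t] qphi_int[OF t] qphi_one[OF t]] unfolding q_def by auto
  have M0: "0 \<le> M" using L_bound[of 0 undefined] by auto
  define N where "N = (\<integral>z. \<bar>q 0 z - q 1 z\<bar> \<partial>Z)"
  have qLint: "integrable Z (\<lambda>z. q s z * L z t)" if "s \<in> {0,1}" "t \<in> {0,1}" for s t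
  proof (rule Bochner_Integration.integrable_bound[where f="\<lambda>z. M * q s z"])
    show "integrable Z (\<lambda>z. M * q s z)" using qp[OF that(1)] by auto
    show "(\<lambda>z. q s z * L z t) \<in> borel_measurable Z"
    proof -
      have "q s \<in> borel_measurable Z" using qp[OF that(1)] by auto
      moreover have "(\<lambda>z. L z t) \<in> borel_measurable Z" using L_meas[OF that(2)] unfolding L_def .
      ultimately show ?thesis by (rule borel_measurable_times)
    qed
    show "AE z in Z. norm (q s z * L z t) \<le> norm (M * q s z)"
    proof (rule AE_I2)
      fix z assume z: "z \<in> space Z"
      have "\<bar>q s z\<bar> * \<bar>L z t\<bar> \<le> \<bar>q s z\<bar> * M"
        using L_bound[OF that(2)] unfolding L_def by (intro mult_left_mono) auto
      then show "norm (q s z * L z t) \<le> norm (M * q s z)"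
        using M0 qp[OF that(1)] z by (simp add: abs_mult mult.commute)
    qed
  qed
  have diff: "(\<integral>z. q (1-t) z * L z t \<partial>Z) - (\<integral>z. q t z * L z t \<partial>Z) \<le> M * N" if t: "t \<in> {0,1}" for t
  proof -
    have t': "1 - t \<in> {0,1}" using t by auto
    have "(\<integral>z. q (1-t) z * L z t \<partial>Z) - (\<integral>z. q t z * L z t \<partial>Z)
        = (\<integral>z. q (1-t) z * L z t - q t z * L z t \<partial>Z)"
      using qLint[OF t' t] qLint[OF t t] by simp
    also have "\<dots> \<le> (\<integral>z. M * \<bar>q 0 z - q 1 z\<bar> \<partial>Z)"
    proof (rule integral_mono)
      show "integrable Z (\<lambda>z. q (1-t) z * L z t - q t z * L z t)"
        using qLint[OF t' t] qLint[OF t t] by simp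
      show "integrable Z (\<lambda>z. M * \<bar>q 0 z - q 1 z\<bar>)"
        using qp[OF t01(1)] qp[OF t01(2)] by auto
      fix z assume "z \<in> space Z"
      have "q (1-t) z * L z t - q t z * L z t = (q (1-t) z - q t z) * L z t" by (simp add: algebra_simps)
      also have "\<dots> \<le> \<bar>q (1-t) z - q t z\<bar> * \<bar>L z t\<bar>" by (metis abs_ge_self abs_mult)
      also have "\<dots> \<le> \<bar>q (1-t) z - q t z\<bar> * M"
        using L_bound[OF t] unfolding L_def by (intro mult_left_mono) auto
      also have "\<bar>q (1-t) z - q t z\<bar> = \<bar>q 0 z - q 1 z\<bar>" using t by auto
      finally show "q (1-t) z * L z t - q t z * L z t \<le> M * \<bar>q 0 z - q 1 z\<bar>" by (simp add: mult.commute)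
    qed
    also have "\<dots> = M * N" unfolding N_def by simp
    finally show ?thesis .
  qed
  have lhs: "epsCF Z pT (qmarg py qphi) (Lf f g pYP) x
      = pT x 1 * (\<integral>z. q (1-0) z * L z 0 \<partial>Z) + pT x 0 * (\<integral>z. q (1-1) z * L z 1 \<partial>Z)"
    unfolding epsCF_def epsCFt_def q_def L_def by simp
  have rhs: "(\<Sum>t\<in>{0,1::nat}. pT x (1 - t) * epsF Z (qmarg py qphi) (Lf f g pYP) t x)
      = pT x 1 * (\<integral>z. q 0 z * L z 0 \<partial>Z) + pT x 0 * (\<integral>z. q 1 z * L z 1 \<partial>Z)"
    unfolding epsF_def q_def L_def by simp
  have key: "epsCF Z pT (qmarg py qphi) (Lf f g pYP) x
      \<le> (\<Sum>t\<in>{0,1::nat}. pT x (1 - t) * epsF Z (qmarg py qphi) (Lf f g pYP) t x) + M * N"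
  proof -
    have a: "pT x 1 * ((\<integral>z. q (1-0) z * L z 0 \<partial>Z) - (\<integral>z. q 0 z * L z 0 \<partial>Z)) \<le> pT x 1 * (M * N)"
      using diff[OF t01(1)] pT_nonneg[OF t01(2)] by (intro mult_left_mono) auto
    have b: "pT x 0 * ((\<integral>z. q (1-1) z * L z 1 \<partial>Z) - (\<integral>z. q 1 z * L z 1 \<partial>Z)) \<le> pT x 0 * (M * N)"
      using diff[OF t01(2)] pT_nonneg[OF t01(1)] by (intro mult_left_mono) auto
    have "pT x 1 * (M * N) + pT x 0 * (M * N) = (pT x 0 + pT x 1) * (M * N)" by (simp add: algebra_simps)
    then have "pT x 1 * (M * N) + pT x 0 * (M * N) = M * N" using pT_sum by simp
    then show ?thesis unfolding lhs rhs using a b by (simp add: algebra_simps)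
  qed
  have Dx: "Dx Z (qmarg py qphi) x = ereal_sqrt (KLdiv Z (q 0) (q 1) / 2) + ereal_sqrt (KLdiv Z (q 1) (q 0) / 2)"
    unfolding Dx_def q_def by simp
  have sq_nonneg: "ereal_sqrt a \<noteq> -\<infinity>" for a by (cases a) (auto simp: ereal_sqrt_def)
  show ?thesis
  proof (cases "KLdiv Z (q 0) (q 1) = \<infinity> \<or> KLdiv Z (q 1) (q 0) = \<infinity>")
    case True
    then have D: "Dx Z (qmarg py qphi) x = \<infinity>"
      unfolding Dx using sq_nonneg by (auto simp: ereal_sqrt_def)
    show ?thesis
    proof (cases "M = 0")
      case True
      then show ?thesis using key by (simp add: D)
    next
      case False
      then have "M > 0" using M0 by simp
      then show ?thesis by (simp add: D q_def L_def)
    qed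
  next
    case False
    then obtain k0 k1 where k0: "KLdiv Z (q 0) (q 1) = ereal k0" and k1: "KLdiv Z (q 1) (q 0) = ereal k1"
      using KLdiv_cases by metis
    have P0: "0 \<le> k0 \<and> (\<integral>z. \<bar>q 0 z - q 1 z\<bar> \<partial>Z) \<le> 2 * sqrt (k0/2)"
      using qp[OF t01(1)] qp[OF t01(2)] by (intro pinsker_aux[OF Z _ _ _ _ _ _ _ _ k0]) auto
    have P1: "0 \<le> k1 \<and> (\<integral>z. \<bar>q 1 z - q 0 z\<bar> \<partial>Z) \<le> 2 * sqrt (k1/2)"
      using qp[OF t01(1)] qp[OF t01(2)] by (intro pinsker_aux[OF Z _ _ _ _ _ _ _ _ k1]) auto
    have "(\<integral>z. \<bar>q 1 z - q 0 z\<bar> \<partial>Z) = N" unfolding N_def by (simp add: abs_minus_commute)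
    then have NS: "N \<le> sqrt (k0/2) + sqrt (k1/2)" using P0 P1 unfolding N_def by linarith
    have D: "Dx Z (qmarg py qphi) x = ereal (sqrt (k0/2) + sqrt (k1/2))"
      unfolding Dx k0 k1 by (simp add: ereal_sqrt_def)
    have "M * N \<le> M * (sqrt (k0/2) + sqrt (k1/2))" using NS M0 by (intro mult_left_mono)
    then show ?thesis using key unfolding D q_def L_def by simp
  qed
qed

end
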